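(* Let $T$ be as in the context. If a directed cycle in $T$ contains exactly $l$ restricted vertices, then it contains exactly $l$ floor vertices.
   Context: Let $A$ be a finite alphabet with a linear order $<$, extended to the lexicographic order on words. Let $\mathcal{F}$ be a set of words over $A$ (forbidden words). A word $w$ is in the language if the bi-infinite periodic sequence $\cdots www\cdots$ contains no element of $\mathcal{F}$ as a factor; $W_k$ denotes the set of words of length $k$ in the language. Fix $n\geq 1$ and consider the digraph with vertex set $A^n$ and arcs $(as,sb)$ for $a,b\in A$, $s\in A^{n-1}$, $asb\in W_{n+1}$, the label of $(as,sb)$ being $b$. The de Bruijn graph of span $n$, $G_n$, is a strongly connected component of maximum size of this digraph; vertices are identified with their words. Let $m=m_1\cdots m_n$ be the vertex of $G_n$ whose word is lexicographically largest. For each vertex $v$, let $e(v)$ be the arc of $G_n$ with tail $v$ having maximum label, and $\gamma(v)$ its label. $T$ is the spanning subgraph of $G_n$ with arc set $\{e(v): v\in V(G_n), v\neq m\}$ (so $m$ lies on no cycle of $T$). For a vertex $u\neq m$, $g(u)$ is the longest word which is both a prefix of $m$ and a suffix of $u$ (possibly empty), and $\alpha(u)=m_{|g(u)|+1}$. A vertex $u\ne m$ is a floor vertex if $g(u)$ is the empty word, and a restricted vertex if $\gamma(u)<\alpha(u)$. *)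

theory Defs
  imports Main "HOL-Library.List_Lexorder"
begin

text \<open>Words are lists over a finite linearly ordered alphabet (the type 'a).
  Lists carry the lexicographic order from List_Lexorder.\<close>

definition occurs_periodic :: "'a list \<Rightarrow> 'a list \<Rightarrow> bool" where
  "occurs_periodic u w \<longleftrightarrow>
     (\<exists>i::nat. u = map (\<lambda>j. w ! ((i + j) mod length w)) [0..<length u])"

definition in_lang :: "'a list set \<Rightarrow> 'a list \<Rightarrow> bool" where
  "in_lang F w \<longleftrightarrow> w \<noteq> [] \<and> (\<forall>u\<in>F. \<not> occurs_periodic u w)"

definition W :: "'a list set \<Rightarrow> nat \<Rightarrow> 'a list set" where
  "W F k = {w. length w = k \<and> in_lang F w}"

definition db_arcs :: "'a list set \<Rightarrow> nat \<Rightarrow> ('a list \<times> 'a list) set" where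
  "db_arcs F n = {(a # s, s @ [b]) | a s b. length s = n - 1 \<and> a # s @ [b] \<in> W F (n + 1)}"

definition is_scc :: "('b \<times> 'b) set \<Rightarrow> 'b set \<Rightarrow> 'b set \<Rightarrow> bool" where
  "is_scc R Vall V \<longleftrightarrow> V \<subseteq> Vall \<and> V \<noteq> {} \<and>
     (\<forall>x\<in>V. \<forall>y\<in>V. (x, y) \<in> R\<^sup>*) \<and>
     (\<forall>x\<in>V. \<forall>y\<in>Vall. (x, y) \<in> R\<^sup>* \<and> (y, x) \<in> R\<^sup>* \<longrightarrow> y \<in> V)"

definition is_debruijn :: "'a list set \<Rightarrow> nat \<Rightarrow> 'a list set \<Rightarrow> bool" where
  "is_debruijn F n V \<longleftrightarrow> is_scc (db_arcs F n) {v. length v = n} V \<and>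
     (\<forall>V'. is_scc (db_arcs F n) {v. length v = n} V' \<longrightarrow> card V' \<le> card V)"

definition G_arcs :: "'a list set \<Rightarrow> nat \<Rightarrow> 'a list set \<Rightarrow> ('a list \<times> 'a list) set" where
  "G_arcs F n V = db_arcs F n \<inter> (V \<times> V)"

definition gamma :: "'a::linorder list set \<Rightarrow> nat \<Rightarrow> 'a list set \<Rightarrow> 'a list \<Rightarrow> 'a" where
  "gamma F n V v = Max {b. (v, tl v @ [b]) \<in> G_arcs F n V}"

definition T_arcs :: "'a::{finite,linorder} list set \<Rightarrow> nat \<Rightarrow> 'a list set \<Rightarrow> ('a list \<times> 'a list) set" where
  "T_arcs F n V = {(v, tl v @ [gamma F n V v]) | v. v \<in> V \<and> v \<noteq> Max V \<and>
                     (\<exists>b. (v, tl v @ [b]) \<in> G_arcs F n V)}"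

text \<open>length of g(u): longest prefix of m that is a suffix of u\<close>
definition glen :: "'a list \<Rightarrow> 'a list \<Rightarrow> nat" where
  "glen m u = (GREATEST k. k \<le> length u \<and> take k m = drop (length u - k) u)"

definition alpha :: "'a list \<Rightarrow> 'a list \<Rightarrow> 'a" where
  "alpha m u = m ! glen m u"

definition floor_vertex :: "'a list \<Rightarrow> 'a list \<Rightarrow> bool" where
  "floor_vertex m u \<longleftrightarrow> u \<noteq> m \<and> glen m u = 0"

definition restricted :: "'a::{finite,linorder} list set \<Rightarrow> nat \<Rightarrow> 'a list set \<Rightarrow> 'a list \<Rightarrow> bool" where
  "restricted F n V u \<longleftrightarrow> u \<noteq> Max V \<and> gamma F n V u < alpha (Max V) u"

definition is_cycle :: "('b \<times> 'b) set \<Rightarrow> 'b list \<Rightarrow> bool" where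
  "is_cycle E c \<longleftrightarrow> c \<noteq> [] \<and> distinct c \<and>
     (\<forall>i<length c. (c ! i, c ! ((i + 1) mod length c)) \<in> E)"

end

theory Submission
  imports Defs
begin

lemma lex_bigger:
  fixes m w :: "'a::linorder list"
  assumes "length w = length m" "i < length m" "take i w = take i m" "m!i < w!i"
  shows "m < w"
proof -
  have "m = take i m @ m!i # drop (Suc i) m" using assms by (simp add: id_take_nth_drop)
  moreover have "w = take i m @ w!i # drop (Suc i) w" using assms
    by (metis id_take_nth_drop)
  ultimately show ?thesis using assms(4) unfolding list_less_def
    by (metis (mono_tags, lifting) case_prodI lexord_append_left_rightI mem_Collect_eq)
qed

lemma glen_props: "take (glen m u) m = drop (length u - glen m u) u \<and> glen m u \<le> length u"
proof -
  let ?P = "\<lambda>k. k \<le> length u \<and> take k m = drop (length u - k) u"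
  have "?P 0" by simp
  hence "?P (Greatest ?P)" by (rule GreatestI_nat[where b="length u"]) auto
  thus ?thesis unfolding glen_def by auto
qed

lemma glen_max: "k \<le> length u \<Longrightarrow> take k m = drop (length u - k) u \<Longrightarrow> k \<le> glen m u"
  unfolding glen_def by (rule Greatest_le_nat[where b="length u"]) auto

lemma step:
  fixes m :: "'a::linorder list"
  assumes len: "\<forall>x\<in>V. length x = n"
    and mV: "m \<in> V" and mmax: "\<forall>w\<in>V. w \<le> m"
    and W: "\<forall>x\<in>V. \<forall>t\<le>n. \<exists>w\<in>V. take (n-t) w = drop t x"
    and uV: "u \<in> V" and um: "u \<noteq> m"
    and u'V: "tl u @ [g] \<in> V"
  shows "glen m (tl u @ [g]) = 0 \<longleftrightarrow> g < m ! glen m u"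
proof -
  define k where "k = glen m u"
  define u' where "u' = tl u @ [g]"
  have lu: "length u = n" and lm: "length m = n" and lu': "length u' = n"
    using len uV mV u'V u'_def by auto
  have n1: "n \<ge> 1" using lu' u'_def by auto
  have kp: "take k m = drop (n - k) u" "k \<le> n" using glen_props[of m u] lu k_def by auto
  have kn: "k < n"
  proof (rule ccontr)
    assume "\<not> k < n" hence "k = n" using kp by auto
    hence "m = u" using kp lm lu by simp
    thus False using um by simp
  qed
  have dropu': "drop (n - Suc j) u' = drop (n - j) u @ [g]" if "j < n" for j
  proof -
    have "tl (drop (n - Suc j) u) = drop (Suc (n - Suc j)) u" by (metis drop_Suc drop_tl)
    also have "Suc (n - Suc j) = n - j" using that by simp
    finally show ?thesis using that lu n1 unfolding u'_def by (simp add: drop_tl)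
  qed
  have takem: "take (Suc j) m = take j m @ [m!j]" if "j < n" for j
    using that lm by (simp add: take_Suc_conv_app_nth)
  have no_gt: "\<not> m!k < g"
  proof
    assume gt: "m!k < g"
    obtain w where wV: "w \<in> V" and tw: "take (n - (n - Suc k)) w = drop (n - Suc k) u'"
      using W u'V u'_def by (meson diff_le_self)
    have tw2: "take (Suc k) w = take k m @ [g]" using tw kn kp dropu'[of k] by simp
    have lw: "length w = n" using len wV by auto
    have "take k w = take k m" using tw2 by (metis butlast_snoc butlast_take diff_Suc_1 kn lw take_take le_add2 plus_1_eq_Suc min_absorb1 Suc_leI)
    moreover have "w!k = g" using tw2 kn lw
      by (metis length_take min_absorb2 nth_append_length nth_take lessI Suc_leI kp(2) length_take lm min.absorb4 takem)
    ultimately have "m < w" using lex_bigger[of w m k] lw lm kn gt by simp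
    thus False using mmax wV by (simp add: leD)
  qed
  show ?thesis
  proof
    assume g0: "glen m (tl u @ [g]) = 0"
    show "g < m ! glen m u"
    proof (rule ccontr)
      assume "\<not> g < m ! glen m u"
      hence "g = m!k" using no_gt k_def by auto
      hence "take (Suc k) m = drop (n - Suc k) u'" using takem[OF kn] dropu'[OF kn] kp by simp
      hence "Suc k \<le> glen m u'" using glen_max[of "Suc k" u' m] lu' kn by simp
      thus False using g0 u'_def by simp
    qed
  next
    assume lt: "g < m ! glen m u"
    hence lt: "g < m!k" using k_def by simp
    show "glen m (tl u @ [g]) = 0"
    proof (rule ccontr)
      define j where "j = glen m u'"
      assume "glen m (tl u @ [g]) \<noteq> 0"
      hence j1: "j \<ge> 1" using j_def u'_def by simp
      have jp: "take j m = drop (n - j) u'" "j \<le> n" using glen_props[of m u'] lu' j_def by auto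
      define i where "i = j - 1"
      have ij: "j = Suc i" using j1 i_def by simp
      have in_: "i < n" using jp ij by simp
      have "take i m @ [m!i] = drop (n - i) u @ [g]"
        using jp(1) takem[OF in_] dropu'[OF in_] ij by simp
      hence ti: "take i m = drop (n - i) u" and mi: "m!i = g" by auto
      have "i \<le> k" using glen_max[of i u m] ti lu in_ k_def by simp
      moreover have "i \<noteq> k" using mi lt by auto
      ultimately have ik: "i < k" by simp
      define t where "t = k - i"
      obtain w where wV: "w \<in> V" and tw: "take (n - t) w = drop t m"
        using W mV t_def kn by (metis diff_le_self le_trans less_imp_le)
      have lw: "length w = n" using len wV by auto
      have itn: "i \<le> n - t" using t_def ik kn by simp
      have "take i w = take i (take (n-t) w)" using itn by (simp add: min_absorb1)
      also have "\<dots> = take i (drop t m)" using tw by simp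
      finally have "take i w = take i (drop t m)" .
      also have "\<dots> = drop t (take k m)" using t_def ik by (simp add: take_drop)
      also have "\<dots> = drop t (drop (n-k) u)" using kp by simp
      also have "\<dots> = take i m" using ti t_def ik kn by (simp add: add.commute)
      finally have twi: "take i w = take i m" .
      have "w!i = (take (n-t) w)!i" using t_def ik kn by simp
      also have "\<dots> = m!k" using tw t_def ik kn lm by simp
      finally have "w!i = m!k" .
      hence "m < w" using lex_bigger[of w m i] lw lm in_ twi mi lt by simp
      thus False using mmax wV by (simp add: leD)
    qed
  qed
qed

lemma walk:
  assumes len: "\<forall>x\<in>V. length x = n"
    and out: "\<forall>x\<in>V. \<exists>b. tl x @ [b] \<in> V"
  shows "x \<in> V \<Longrightarrow> t \<le> n \<Longrightarrow> \<exists>w\<in>V. take (n-t) w = drop t x"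
proof (induction t)
  case 0
  then show ?case using len by auto
next
  case (Suc t)
  then obtain w where wV: "w \<in> V" and tw: "take (n-t) w = drop t x" by auto
  obtain b where bV: "tl w @ [b] \<in> V" using out wV by auto
  have lw: "length w = n" using len wV by auto
  have "take (n - Suc t) (tl w @ [b]) = take (n - Suc t) (tl w)" using lw Suc by simp
  also have "\<dots> = tl (take (Suc (n - Suc t)) w)" by (simp add: take_tl)
  also have "Suc (n - Suc t) = n - t" using Suc by simp
  also have "tl (take (n - t) w) = drop (Suc t) x" using tw by (simp add: drop_Suc drop_tl)
  finally show ?case using bV by blast
qed

lemma outarc:
  assumes scc: "is_scc (db_arcs F n) {v. length v = n} V"
    and xV: "x \<in> V" and zV: "z \<in> V" and xz: "x \<noteq> z"
  shows "\<exists>b. tl x @ [b] \<in> V"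
proof -
  let ?R = "db_arcs F n"
  have "(x, z) \<in> ?R\<^sup>*" using scc xV zV unfolding is_scc_def by auto
  then obtain y where xy: "(x,y) \<in> ?R" and yz: "(y,z) \<in> ?R\<^sup>*"
    using xz by (metis converse_rtranclE)
  obtain a s b where xs: "x = a # s" and ys: "y = s @ [b]" and ls: "length s = n - 1"
    using xy unfolding db_arcs_def by auto
  have sub: "V \<subseteq> {v. length v = n}" and conn: "\<forall>x\<in>V. \<forall>y\<in>V. (x, y) \<in> ?R\<^sup>*"
    and clo: "\<forall>x\<in>V. \<forall>y\<in>{v. length v = n}. (x, y) \<in> ?R\<^sup>* \<and> (y, x) \<in> ?R\<^sup>* \<longrightarrow> y \<in> V"
    using scc unfolding is_scc_def by blast+
  have "length x = n" using sub xV by blast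
  hence ly: "length y = n" using ls ys xs by simp
  have xy': "(x,y) \<in> ?R\<^sup>*" using xy by simp
  have "(z,x) \<in> ?R\<^sup>*" using conn zV xV by blast
  hence yx: "(y,x) \<in> ?R\<^sup>*" using yz by (meson rtrancl_trans)
  have "y \<in> V" using clo xV ly xy' yx by blast
  thus ?thesis using xs ys by auto
qed

lemma Tarc:
  fixes F :: "('a::{finite,linorder}) list set"
  assumes "(v, v') \<in> T_arcs F n V"
  shows "v \<in> V \<and> v \<noteq> Max V \<and> v' = tl v @ [gamma F n V v] \<and> v' \<in> V"
proof -
  have a: "v \<in> V" "v \<noteq> Max V" "v' = tl v @ [gamma F n V v]"
    and ex: "\<exists>b. (v, tl v @ [b]) \<in> G_arcs F n V"
    using assms unfolding T_arcs_def by auto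
  let ?S = "{b. (v, tl v @ [b]) \<in> G_arcs F n V}"
  have "Max ?S \<in> ?S" using ex by (intro Max_in) auto
  hence "(v, v') \<in> G_arcs F n V" using a unfolding gamma_def by simp
  thus ?thesis using a unfolding G_arcs_def by auto
qed

lemma count_nth:
  assumes "distinct c"
  shows "card {v \<in> set c. P v} = card {i. i < length c \<and> P (c!i)}"
proof -
  have "{v \<in> set c. P v} = (!) c ` {i. i < length c \<and> P (c!i)}"
    by (auto simp: in_set_conv_nth)
  moreover have "inj_on ((!) c) {i. i < length c \<and> P (c!i)}"
    using assms by (intro inj_on_nth) auto
  ultimately show ?thesis by (simp add: card_image)
qed

theorem corollary2:
  fixes F :: "('a::{finite,linorder}) list set" and n :: nat
    and V :: "'a list set" and c :: "'a list list" and l :: nat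
  assumes "n \<ge> 1"
    and "is_debruijn F n V"
    and "is_cycle (T_arcs F n V) c"
    and "card {v \<in> set c. restricted F n V v} = l"
  shows "card {v \<in> set c. floor_vertex (Max V) v} = l"
proof -
  define m where "m = Max V"
  define L where "L = length c"
  have scc: "is_scc (db_arcs F n) {v. length v = n} V" using assms(2) unfolding is_debruijn_def by auto
  have sub: "V \<subseteq> {v. length v = n}" and Vne: "V \<noteq> {}" using scc unfolding is_scc_def by blast+
  have len: "\<forall>x\<in>V. length x = n" using sub by blast
  have VS: "V \<subseteq> {xs. set xs \<subseteq> UNIV \<and> length xs = n}" using sub by blast
  have "finite {xs. set xs \<subseteq> (UNIV::'a set) \<and> length xs = n}" by (rule finite_lists_length_eq) simp
  hence finV: "finite V" using VS by (rule finite_subset[rotated])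
  have mV: "m \<in> V" using finV Vne m_def by simp
  have mmax: "\<forall>w\<in>V. w \<le> m" using finV m_def by simp
  have cyc: "c \<noteq> []" "distinct c" and arcs: "\<And>i. i < L \<Longrightarrow> (c!i, c!((i+1) mod L)) \<in> T_arcs F n V"
    using assms(3) unfolding is_cycle_def L_def by auto
  have L0: "L > 0" using cyc L_def by simp
  have T0: "c!0 \<in> V" "c!0 \<noteq> m" using Tarc[OF arcs[OF L0]] m_def by auto
  have out: "\<forall>x\<in>V. \<exists>b. tl x @ [b] \<in> V"
  proof
    fix x assume xV: "x \<in> V"
    show "\<exists>b. tl x @ [b] \<in> V"
    proof (cases "x = m")
      case True thus ?thesis using outarc[OF scc xV T0(1)] T0 by auto
    next
      case False thus ?thesis using outarc[OF scc xV mV] by auto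
    qed
  qed
  have W: "\<forall>x\<in>V. \<forall>t\<le>n. \<exists>w\<in>V. take (n-t) w = drop t x"
    using walk[OF len out] by blast
  define f where "f = (\<lambda>i. Suc i mod L)"
  have key: "floor_vertex m (c!(f i)) \<longleftrightarrow> restricted F n V (c!i)" if iL: "i < L" for i
  proof -
    have A: "c!i \<in> V" "c!i \<noteq> m" "c!(f i) = tl (c!i) @ [gamma F n V (c!i)]" "c!(f i) \<in> V"
      using Tarc[OF arcs[OF iL]] m_def f_def by auto
    have "f i < L" using L0 f_def by simp
    hence B: "c!(f i) \<noteq> m" using Tarc[OF arcs] m_def by blast
    have "glen m (c!(f i)) = 0 \<longleftrightarrow> gamma F n V (c!i) < m ! glen m (c!i)"
      using step[OF len mV mmax W A(1) A(2), of "gamma F n V (c!i)"] A(3,4) by simp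
    thus ?thesis unfolding floor_vertex_def restricted_def alpha_def using A(2) B m_def by auto
  qed
  define R where "R = {i. i < L \<and> restricted F n V (c!i)}"
  define Fl where "Fl = {i. i < L \<and> floor_vertex m (c!i)}"
  have inj: "inj_on f {..<L}" unfolding f_def inj_on_def by (auto simp: mod_Suc split: if_splits)
  have img: "Fl = f ` R"
  proof
    show "f ` R \<subseteq> Fl" using key L0 unfolding R_def Fl_def f_def by auto
  next
    show "Fl \<subseteq> f ` R"
    proof
      fix j assume j: "j \<in> Fl"
      define i where "i = (if j = 0 then L - 1 else j - 1)"
      have jL: "j < L" using j Fl_def by simp
      have iL: "i < L" using jL L0 i_def by auto
      have fi: "f i = j" using jL L0 unfolding i_def f_def by auto
      have "i \<in> R" using key[OF iL] fi j iL unfolding R_def Fl_def by auto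
      thus "j \<in> f ` R" using fi by blast
    qed
  qed
  have "card Fl = card R" using img inj card_image[of f R] unfolding R_def
    by (metis (no_types, lifting) inj_on_subset lessThan_iff mem_Collect_eq subsetI)
  thus ?thesis using assms(4) count_nth[OF cyc(2)] unfolding R_def Fl_def L_def m_def by metis
qed

end
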